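(* Let $\Gamma$ be the operator defined below. If $\Gamma=\sum_iA_i\otimes B_i\otimes C_i$ (finite sum) with nonzero positive semidefinite operators $A_i$ on $\mathcal H_1\otimes\mathcal H_2$, $B_i$ on $\mathcal H_3\otimes\mathcal H_4$, $C_i$ on $\mathcal H_5\otimes\mathcal H_6$, then for every $i$ there are $\alpha,\beta,\gamma>0$ and a triple $(a,b,c)\in T$ with $(A_i,B_i,C_i)=(\alpha[\mathbf a],\beta[\mathbf b],\gamma[\mathbf c])$, where $T=\{(0,0,0),(1,2,0),(2,3,0),(3,1,0),(0,3,1),(1,1,1),(2,0,1),(3,2,1),(0,1,2),(1,3,2),(2,2,2),(3,0,2),(0,2,3),(1,0,3),(2,1,3),(3,3,3)\}$.
   Context: $\mathcal H_1,\mathcal H_3,\mathcal H_5\cong\mathbb C^2$ and $\mathcal H_2,\mathcal H_4,\mathcal H_6\cong\mathbb C^2\otimes\mathbb C^2$. On each pair ($\mathcal H_1\otimes\mathcal H_2$, $\mathcal H_3\otimes\mathcal H_4$, $\mathcal H_5\otimes\mathcal H_6$) define $|\mathbf 0\rangle=|0\rangle|00\rangle$, $|\mathbf 1\rangle=|1\rangle|01\rangle$, $|\mathbf 2\rangle=|+\rangle|10\rangle$, $|\mathbf 3\rangle=|-\rangle|11\rangle$, where $|\pm\rangle=(|0\rangle\pm|1\rangle)/\sqrt2$, and $[\mathbf x]:=|\mathbf x\rangle\langle\mathbf x|$. Let $\Gamma=\frac12\sum_{(a,b,c)\in T}[\mathbf a]\otimes[\mathbf b]\otimes[\mathbf c]$,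 the three factors acting on $\mathcal H_1\otimes\mathcal H_2$, $\mathcal H_3\otimes\mathcal H_4$, $\mathcal H_5\otimes\mathcal H_6$ respectively. *)

theory Defs
  imports Complex_Main "HOL-Library.Complex_Order"
begin

text \<open>Computational basis index of H_1 (a qubit, False = 0, True = 1) tensored with
  H_2 = C^2 (x) C^2 (two qubits).  An operator on H_1 (x) H_2 is a matrix indexed by idx.\<close>
type_synonym idx = "bool \<times> bool \<times> bool"
type_synonym op = "idx \<Rightarrow> idx \<Rightarrow> complex"

text \<open>First factor of the product basis vectors: |0>, |1>, |+>, |->.\<close>
definition qfac :: "nat \<Rightarrow> bool \<Rightarrow> complex" where
  "qfac x q = (if x = 0 then (if q then 0 else 1)
              else if x = 1 then (if q then 1 else 0)
              else if x = 2 then 1 / complex_of_real (sqrt 2)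
              else (if q then -1 else 1) / complex_of_real (sqrt 2))"

definition rfac :: "nat \<Rightarrow> bool \<times> bool" where
  "rfac x = (if x = 0 then (False, False) else if x = 1 then (False, True)
             else if x = 2 then (True, False) else (True, True))"

text \<open>The vector |bold x> on H_1 (x) H_2, for x in {0,1,2,3}.\<close>
definition bket :: "nat \<Rightarrow> idx \<Rightarrow> complex" where
  "bket x = (\<lambda>(q, r). qfac x q * (if r = rfac x then 1 else 0))"

definition bproj :: "nat \<Rightarrow> op" where
  "bproj x i j = bket x i * cnj (bket x j)"

definition tensor3 :: "op \<Rightarrow> op \<Rightarrow> op \<Rightarrow> (idx \<times> idx \<times> idx) \<Rightarrow> (idx \<times> idx \<times> idx) \<Rightarrow> complex" where
  "tensor3 A B C = (\<lambda>(i, j, k) (i', j', k'). A i i' * B j j' * C k k')"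

definition psd :: "op \<Rightarrow> bool" where
  "psd A \<longleftrightarrow> (\<forall>v :: idx \<Rightarrow> complex. 0 \<le> (\<Sum>i\<in>UNIV. \<Sum>j\<in>UNIV. cnj (v i) * A i j * v j))"

definition Tset :: "(nat \<times> nat \<times> nat) set" where
  "Tset = {(0,0,0),(1,2,0),(2,3,0),(3,1,0),(0,3,1),(1,1,1),(2,0,1),(3,2,1),
           (0,1,2),(1,3,2),(2,2,2),(3,0,2),(0,2,3),(1,0,3),(2,1,3),(3,3,3)}"

definition Gamma :: "(idx \<times> idx \<times> idx) \<Rightarrow> (idx \<times> idx \<times> idx) \<Rightarrow> complex" where
  "Gamma = (\<lambda>I J. (1/2) * (\<Sum>(a, b, c)\<in>Tset. tensor3 (bproj a) (bproj b) (bproj c) I J))"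

end

theory Submission imports Defs begin

definition Fm :: "('a::finite \<Rightarrow> 'a \<Rightarrow> complex) \<Rightarrow> ('a \<Rightarrow> complex) \<Rightarrow> ('a \<Rightarrow> complex) \<Rightarrow> complex" where
  "Fm M u w = (\<Sum>i\<in>UNIV. \<Sum>j\<in>UNIV. cnj (u i) * M i j * w j)"

definition tp :: "(idx \<Rightarrow> complex) \<Rightarrow> (idx \<Rightarrow> complex) \<Rightarrow> (idx \<Rightarrow> complex) \<Rightarrow> idx \<times> idx \<times> idx \<Rightarrow> complex" where
  "tp x y z = (\<lambda>(i,j,k). x i * y j * z k)"

lemma psd_Fm: "psd A \<longleftrightarrow> (\<forall>v. 0 \<le> Fm A v v)"
  unfolding psd_def Fm_def by simp

lemma sum3: "(\<Sum>I\<in>(UNIV::(idx\<times>idx\<times>idx) set). f I) = (\<Sum>i\<in>UNIV. \<Sum>j\<in>UNIV. \<Sum>k\<in>UNIV. f (i,j,k))"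
  by (simp add: UNIV_Times_UNIV[symmetric] sum.cartesian_product del: UNIV_Times_UNIV)

lemma prod3: "(\<Sum>i\<in>A. \<Sum>j\<in>B. \<Sum>k\<in>C. f i * g j * h k) = sum f A * sum g B * (sum h C :: complex)"
proof -
  have "sum f A * sum g B * sum h C = (\<Sum>i\<in>A. f i * (sum g B * sum h C))"
    by (simp add: sum_distrib_right mult.assoc)
  also have "\<dots> = (\<Sum>i\<in>A. \<Sum>j\<in>B. f i * (g j * sum h C))"
    by (simp add: sum_distrib_left[symmetric] sum_distrib_right[symmetric])
  also have "\<dots> = (\<Sum>i\<in>A. \<Sum>j\<in>B. \<Sum>k\<in>C. f i * g j * h k)"
    by (simp add: sum_distrib_left[symmetric] mult.assoc)
  finally show ?thesis by simp
qed

lemma Fm_tensor: "Fm (tensor3 A B C) (tp x y z) (tp x' y' z') = Fm A x x' * Fm B y y' * Fm C z z'"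
proof -
  have inner: "(\<Sum>i'\<in>UNIV. \<Sum>j'\<in>UNIV. \<Sum>k'\<in>UNIV. tensor3 A B C (i,j,k) (i',j',k') * tp x' y' z' (i',j',k')) =
     (\<Sum>i'\<in>UNIV. A i i' * x' i') * (\<Sum>j'\<in>UNIV. B j j' * y' j') * (\<Sum>k'\<in>UNIV. C k k' * z' k')" for i j k
  proof -
    have "(\<Sum>i'\<in>UNIV. \<Sum>j'\<in>UNIV. \<Sum>k'\<in>UNIV. tensor3 A B C (i,j,k) (i',j',k') * tp x' y' z' (i',j',k')) =
      (\<Sum>i'\<in>UNIV. \<Sum>j'\<in>UNIV. \<Sum>k'\<in>UNIV. (A i i' * x' i') * (B j j' * y' j') * (C k k' * z' k'))"
      by (simp add: tensor3_def tp_def mult_ac)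
    then show ?thesis by (simp only: prod3)
  qed
  have "Fm (tensor3 A B C) (tp x y z) (tp x' y' z') =
     (\<Sum>I\<in>UNIV. cnj (tp x y z I) * (\<Sum>J\<in>UNIV. tensor3 A B C I J * tp x' y' z' J))"
    unfolding Fm_def by (simp add: sum_distrib_left mult.assoc)
  also have "\<dots> = (\<Sum>i\<in>UNIV. \<Sum>j\<in>UNIV. \<Sum>k\<in>UNIV.
      (cnj (x i) * (\<Sum>i'\<in>UNIV. A i i' * x' i')) * (cnj (y j) * (\<Sum>j'\<in>UNIV. B j j' * y' j')) * (cnj (z k) * (\<Sum>k'\<in>UNIV. C k k' * z' k')))"
    apply (simp only: sum3)
    apply (intro sum.cong refl)
    apply (simp only: inner)
    apply (simp add: tp_def mult_ac)
    done
  also have "\<dots> = Fm A x x' * Fm B y y' * Fm C z z'"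
    unfolding prod3 Fm_def by (simp add: sum_distrib_left mult.assoc)
  finally show ?thesis .
qed

lemma Fm_sum_op: "Fm (\<lambda>X Y. \<Sum>k\<in>K. f k X Y) u w = (\<Sum>k\<in>K. Fm (f k) u w)"
proof -
  have "Fm (\<lambda>X Y. \<Sum>k\<in>K. f k X Y) u w = (\<Sum>i\<in>UNIV. \<Sum>j\<in>UNIV. \<Sum>k\<in>K. cnj (u i) * f k i j * w j)"
    unfolding Fm_def by (simp add: sum_distrib_left sum_distrib_right)
  also have "\<dots> = (\<Sum>i\<in>UNIV. \<Sum>k\<in>K. \<Sum>j\<in>UNIV. cnj (u i) * f k i j * w j)"
    by (simp only: sum.swap[of _ UNIV K])
  also have "\<dots> = (\<Sum>k\<in>K. \<Sum>i\<in>UNIV. \<Sum>j\<in>UNIV. cnj (u i) * f k i j * w j)"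
    by (rule sum.swap)
  finally show ?thesis by (simp add: Fm_def)
qed

lemma Fm_scal_op: "Fm (\<lambda>X Y. c * M X Y) u w = c * Fm M u w"
  unfolding Fm_def by (simp add: sum_distrib_left mult_ac)

definition ip :: "nat \<Rightarrow> (idx \<Rightarrow> complex) \<Rightarrow> complex" where
  "ip a u = (\<Sum>i\<in>UNIV. cnj (bket a i) * u i)"

lemma Fm_bproj: "Fm (bproj a) u w = cnj (ip a u) * ip a w"
  unfolding Fm_def ip_def bproj_def
  apply (simp only: cnj_sum complex_cnj_mult complex_cnj_cnj sum_product)
  apply (simp add: mult_ac)
  done

lemma Fm_Gamma: "Fm Gamma (tp x y z) (tp x' y' z') =
   1/2 * (\<Sum>(a,b,c)\<in>Tset. Fm (bproj a) x x' * Fm (bproj b) y y' * Fm (bproj c) z z')"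
proof -
  have G: "Gamma = (\<lambda>X Y. 1/2 * (\<Sum>t\<in>Tset. (\<lambda>t X Y. case t of (a,b,c) \<Rightarrow> tensor3 (bproj a) (bproj b) (bproj c) X Y) t X Y))"
    unfolding Gamma_def by (simp add: case_prod_beta)
  have "Fm Gamma (tp x y z) (tp x' y' z') = 1/2 * (\<Sum>t\<in>Tset. Fm (\<lambda>X Y. case t of (a,b,c) \<Rightarrow> tensor3 (bproj a) (bproj b) (bproj c) X Y) (tp x y z) (tp x' y' z'))"
    unfolding G
    apply (subst Fm_scal_op)
    apply (subst Fm_sum_op)
    apply simp
    done
  also have "\<dots> = 1/2 * (\<Sum>(a,b,c)\<in>Tset. Fm (bproj a) x x' * Fm (bproj b) y y' * Fm (bproj c) z z')"
    by (intro arg_cong[where f="\<lambda>s. 1/2 * s"] sum.cong refl) (auto simp: Fm_tensor)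
  finally show ?thesis .
qed

definition qperp :: "nat \<Rightarrow> bool \<Rightarrow> complex" where
  "qperp x q = (if x = 0 then (if q then 1 else 0)
              else if x = 1 then (if q then 0 else 1)
              else if x = 2 then (if q then -1 else 1) / complex_of_real (sqrt 2)
              else 1 / complex_of_real (sqrt 2))"

definition ee :: "nat \<Rightarrow> bool \<Rightarrow> idx \<Rightarrow> complex" where
  "ee x s = (\<lambda>(q, r). (if s then qperp x q else qfac x q) * (if r = rfac x then 1 else 0))"

lemma sum_idx: "(\<Sum>i\<in>(UNIV::idx set). f i) =
  f (False,False,False) + f (False,False,True) + f (False,True,False) + f (False,True,True) +
  f (True,False,False) + f (True,False,True) + f (True,True,False) + f (True,True,True)"
proof -
  have U: "(UNIV::idx set) = {(False,False,False), (False,False,True), (False,True,False), (False,True,True),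
    (True,False,False), (True,False,True), (True,True,False), (True,True,True)}"
    by auto
  show ?thesis by (subst U) (simp add: add.assoc)
qed
lemma s2: "complex_of_real (sqrt 2) * complex_of_real (sqrt 2) = 2"
  by (simp flip: of_real_mult)

lemma s2': "cnj (complex_of_real (sqrt 2)) = complex_of_real (sqrt 2)"
  by simp

lemma le3: "a \<le> (3::nat) \<Longrightarrow> a = 0 \<or> a = 1 \<or> a = 2 \<or> a = 3" by auto

lemma ip_ee: "a \<le> 3 \<Longrightarrow> r \<le> 3 \<Longrightarrow> ip a (ee r s) = (if a = r \<and> \<not> s then 1 else 0)"
  apply (drule le3)+
  apply (elim disjE; cases s)
  apply (simp_all add: ip_def ee_def bket_def sum_idx qfac_def qperp_def rfac_def s2)
  done

definition delta :: "idx \<Rightarrow> idx \<Rightarrow> complex" where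
  "delta x = (\<lambda>j. if j = x then 1 else 0)"

lemma Fm_delta: "Fm N (delta x) (delta y) = N x y"
proof -
  have "cnj (delta x i) * N i j * delta y j = (if j = y then (if i = x then N i j else 0) else 0)" for i j
    by (simp add: delta_def)
  then have "Fm N (delta x) (delta y) = (\<Sum>i\<in>UNIV. \<Sum>j\<in>UNIV. (if j = y then (if i = x then N i j else 0) else 0))"
    unfolding Fm_def by presburger
  also have "\<dots> = N x y" by simp
  finally show ?thesis .
qed

definition rho :: "bool \<times> bool \<Rightarrow> nat" where
  "rho r = (if r = (False,False) then 0 else if r = (False,True) then 1 else if r = (True,False) then 2 else 3)"

lemma s2i: "1 / complex_of_real (sqrt 2) * (1 / complex_of_real (sqrt 2)) = 1/2"
  using s2 by (simp add: field_simps)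

lemma expand_delta: "delta x = (\<lambda>j. qfac (rho (snd x)) (fst x) * ee (rho (snd x)) False j + qperp (rho (snd x)) (fst x) * ee (rho (snd x)) True j)"
proof (rule ext)
  fix j :: idx
  obtain a b c where x: "x = (a,b,c)" by (cases x) auto
  obtain d e f where j: "j = (d,e,f)" by (cases j) auto
  show "delta x j = qfac (rho (snd x)) (fst x) * ee (rho (snd x)) False j + qperp (rho (snd x)) (fst x) * ee (rho (snd x)) True j"
    unfolding x j
    by (cases a; cases b; cases c; cases d; cases e; cases f)
       (simp_all add: delta_def rho_def qfac_def qperp_def ee_def rfac_def s2i s2)
qed

lemma rho_le: "rho r \<le> 3" by (simp add: rho_def)

lemma Fm_lin_l: "Fm M (\<lambda>j. c0 * u j + c1 * v j) w = cnj c0 * Fm M u w + cnj c1 * Fm M v w"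
  unfolding Fm_def by (simp add: algebra_simps sum.distrib sum_distrib_left)

lemma Fm_lin_r: "Fm M u (\<lambda>j. c0 * v j + c1 * w j) = c0 * Fm M u v + c1 * Fm M u w"
  unfolding Fm_def by (simp add: algebra_simps sum.distrib sum_distrib_left)

lemma recon:
  assumes "\<And>\<rho> s \<rho>' s'. \<rho> \<le> 3 \<Longrightarrow> \<rho>' \<le> 3 \<Longrightarrow> Fm N (ee \<rho> s) (ee \<rho>' s') = 0"
  shows "N = (\<lambda>_ _. 0)"
proof (intro ext)
  fix x y
  have "N x y = Fm N (delta x) (delta y)" by (simp add: Fm_delta)
  also have "\<dots> = 0"
    apply (subst expand_delta[of x], subst expand_delta[of y])
    apply (simp only: Fm_lin_l Fm_lin_r assms rho_le)
    apply simp
    done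
  finally show "N x y = 0" .
qed

lemma lin0:
  assumes "\<And>r. 0 \<le> complex_of_real r * z + c"
  shows "z = 0"
proof -
  have h: "r * Re z + Re c \<ge> 0 \<and> r * Im z + Im c = 0" for r
    using assms[of r] by (simp add: less_eq_complex_def)
  have "Im c = 0" using h[of 0] by simp
  then have im: "Im z = 0" using h[of 1] by simp
  have re: "Re z = 0"
  proof (rule ccontr)
    assume nz: "Re z \<noteq> 0"
    have "(-(\<bar>Re c\<bar>+1) / Re z) * Re z + Re c \<ge> 0" using h by blast
    also have "(-(\<bar>Re c\<bar>+1) / Re z) * Re z = -(\<bar>Re c\<bar>+1)" using nz by simp
    finally show False by linarith
  qed
  show ?thesis using re im by (simp add: complex_eq_iff)
qed

lemma ker:
  assumes "psd M" "Fm M u u = 0"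
  shows "Fm M w u = 0 \<and> Fm M u w = 0"
proof -
  define p where "p = Fm M u w"
  define q where "q = Fm M w u"
  define c where "c = Fm M w w"
  have key: "0 \<le> cnj t * p + t * q + c" for t
  proof -
    have "0 \<le> Fm M (\<lambda>j. t * u j + 1 * w j) (\<lambda>j. t * u j + 1 * w j)"
      using assms(1) by (simp add: psd_Fm)
    also have "\<dots> = cnj t * p + t * q + c"
      apply (simp only: Fm_lin_l Fm_lin_r)
      apply (simp add: assms(2) p_def q_def c_def algebra_simps)
      done
    finally show ?thesis .
  qed
  have "p + q = 0"
  proof (rule lin0[where c=c])
    fix r
    show "0 \<le> complex_of_real r * (p + q) + c"
      using key[of "complex_of_real r"] by (simp add: algebra_simps)
  qed
  moreover have "\<i> * (q - p) = 0"
  proof (rule lin0[where c=c])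
    fix r
    show "0 \<le> complex_of_real r * (\<i> * (q - p)) + c"
      using key[of "\<i> * complex_of_real r"] by (simp add: algebra_simps)
  qed
  ultimately have "p = 0 \<and> q = 0" by (simp add: algebra_simps)
  then show ?thesis unfolding p_def q_def by auto
qed

lemma nonzero:
  assumes "psd M" "M \<noteq> (\<lambda>_ _. 0)"
  shows "\<exists>\<rho>\<le>3. \<exists>s. Fm M (ee \<rho> s) (ee \<rho> s) \<noteq> 0"
proof (rule ccontr)
  assume "\<not> ?thesis"
  then have z: "\<And>\<rho> s. \<rho> \<le> 3 \<Longrightarrow> Fm M (ee \<rho> s) (ee \<rho> s) = 0" by blast
  have "M = (\<lambda>_ _. 0)"
    by (rule recon) (use ker[OF assms(1) z] in blast)
  with assms(2) show False by simp
qed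

lemma Fm_diff_op: "Fm (\<lambda>X Y. M X Y - c * P X Y) u w = Fm M u w - c * Fm P u w"
  unfolding Fm_def by (simp add: algebra_simps sum_subtractf sum_distrib_left)

lemma Tset_le: "(a,b,c) \<in> Tset \<Longrightarrow> a \<le> 3 \<and> b \<le> 3 \<and> c \<le> 3"
  unfolding Tset_def by (simp only: insert_iff empty_iff prod.inject) (elim disjE; simp)

lemma latin1: "(a,b,c) \<in> Tset \<Longrightarrow> (a',b,c) \<in> Tset \<Longrightarrow> a = a'"
  unfolding Tset_def by (simp only: insert_iff empty_iff prod.inject) (elim disjE conjE; simp)
lemma latin2: "(a,b,c) \<in> Tset \<Longrightarrow> (a,b',c) \<in> Tset \<Longrightarrow> b = b'"
  unfolding Tset_def by (simp only: insert_iff empty_iff prod.inject) (elim disjE conjE; simp)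
lemma latin3: "(a,b,c) \<in> Tset \<Longrightarrow> (a,b,c') \<in> Tset \<Longrightarrow> c = c'"
  unfolding Tset_def by (simp only: insert_iff empty_iff prod.inject) (elim disjE conjE; simp)

lemma Fb: "a \<le> 3 \<Longrightarrow> r \<le> 3 \<Longrightarrow> Fm (bproj a) (ee r s) (ee r s) = (if a = r \<and> \<not> s then 1 else 0)"
  by (simp add: Fm_bproj ip_ee)

lemma Gamma_basis:
  assumes "r1 \<le> 3" "r2 \<le> 3" "r3 \<le> 3"
    and "\<not> (\<not> s1 \<and> \<not> s2 \<and> \<not> s3 \<and> (r1,r2,r3) \<in> Tset)"
  shows "Fm Gamma (tp (ee r1 s1) (ee r2 s2) (ee r3 s3)) (tp (ee r1 s1) (ee r2 s2) (ee r3 s3)) = 0"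
proof -
  have "(\<Sum>(a,b,c)\<in>Tset. Fm (bproj a) (ee r1 s1) (ee r1 s1) * Fm (bproj b) (ee r2 s2) (ee r2 s2) * Fm (bproj c) (ee r3 s3) (ee r3 s3)) = 0"
  proof (rule sum.neutral, safe)
    fix a b c assume t: "(a,b,c) \<in> Tset"
    from Tset_le[OF t] have "a \<le> 3" "b \<le> 3" "c \<le> 3" by auto
    then show "Fm (bproj a) (ee r1 s1) (ee r1 s1) * Fm (bproj b) (ee r2 s2) (ee r2 s2) * Fm (bproj c) (ee r3 s3) (ee r3 s3) = 0"
      using assms t by (auto simp: Fb)
  qed
  then show ?thesis by (simp add: Fm_Gamma)
qed

lemma rep:
  assumes "psd M" "M \<noteq> (\<lambda>_ _. 0)" "a \<le> 3"
    and z: "\<And>r s. r \<le> 3 \<Longrightarrow> (r, s) \<noteq> (a, False) \<Longrightarrow> Fm M (ee r s) (ee r s) = 0"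
  shows "\<exists>\<alpha>::real. \<alpha> > 0 \<and> M = (\<lambda>x y. complex_of_real \<alpha> * bproj a x y)"
proof -
  define c where "c = Fm M (ee a False) (ee a False)"
  have N0: "(\<lambda>X Y. M X Y - c * bproj a X Y) = (\<lambda>_ _. 0)"
  proof (rule recon)
    fix r s r' s' assume r: "r \<le> (3::nat)" and r': "r' \<le> (3::nat)"
    show "Fm (\<lambda>X Y. M X Y - c * bproj a X Y) (ee r s) (ee r' s') = 0"
    proof (cases "(r, s) = (a, False)")
      case False
      then have "Fm M (ee r s) (ee r' s') = 0" using ker[OF assms(1) z[OF r False]] by blast
      moreover have "ip a (ee r s) = 0" using False ip_ee[OF assms(3) r] by auto
      ultimately show ?thesis by (simp add: Fm_diff_op Fm_bproj)
    next
      case T1: True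
      show ?thesis
      proof (cases "(r', s') = (a, False)")
        case False
        then have "Fm M (ee r s) (ee r' s') = 0" using ker[OF assms(1) z[OF r' False]] by blast
        moreover have "ip a (ee r' s') = 0" using False ip_ee[OF assms(3) r'] by auto
        ultimately show ?thesis by (simp add: Fm_diff_op Fm_bproj)
      next
        case True
        with T1 show ?thesis using ip_ee[OF assms(3) assms(3)] by (simp add: Fm_diff_op Fm_bproj c_def)
      qed
    qed
  qed
  have M: "M = (\<lambda>x y. c * bproj a x y)"
  proof (intro ext)
    fix x y show "M x y = c * bproj a x y" using fun_cong[OF fun_cong[OF N0, of x], of y] by simp
  qed
  have c0: "0 \<le> c" using assms(1) by (simp add: psd_Fm c_def)
  have cn: "c \<noteq> 0" using assms(2) M by auto
  have "c = complex_of_real (Re c)" using c0 by (simp add: less_eq_complex_def complex_eq_iff)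
  moreover have "Re c > 0" using c0 cn by (simp add: less_eq_complex_def complex_eq_iff)
  ultimately show ?thesis using M by metis
qed

lemma Fm_nonneg: "psd M \<Longrightarrow> 0 \<le> Fm M u u" by (simp add: psd_Fm)

theorem lemma3:
  fixes I :: "'k set" and A B C :: "'k \<Rightarrow> op"
  assumes "finite I"
    and "\<And>i. i \<in> I \<Longrightarrow> psd (A i) \<and> A i \<noteq> (\<lambda>_ _. 0)"
    and "\<And>i. i \<in> I \<Longrightarrow> psd (B i) \<and> B i \<noteq> (\<lambda>_ _. 0)"
    and "\<And>i. i \<in> I \<Longrightarrow> psd (C i) \<and> C i \<noteq> (\<lambda>_ _. 0)"
    and "Gamma = (\<lambda>X Y. \<Sum>i\<in>I. tensor3 (A i) (B i) (C i) X Y)"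
  shows "\<forall>i\<in>I. \<exists>\<alpha> \<beta> \<gamma> :: real. \<alpha> > 0 \<and> \<beta> > 0 \<and> \<gamma> > 0 \<and>
           (\<exists>(a, b, c)\<in>Tset.
              A i = (\<lambda>x y. complex_of_real \<alpha> * bproj a x y) \<and>
              B i = (\<lambda>x y. complex_of_real \<beta> * bproj b x y) \<and>
              C i = (\<lambda>x y. complex_of_real \<gamma> * bproj c x y))"
proof
  fix i0 assume i0: "i0 \<in> I"
  have GS: "Fm Gamma (tp x y z) (tp x y z) = (\<Sum>i\<in>I. Fm (A i) x x * Fm (B i) y y * Fm (C i) z z)" for x y z
    by (subst assms(5)) (simp only: Fm_sum_op Fm_tensor)
  have K: "\<not> s1 \<and> \<not> s2 \<and> \<not> s3 \<and> (r1,r2,r3) \<in> Tset"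
    if r: "r1 \<le> 3" "r2 \<le> 3" "r3 \<le> 3"
    and nz: "Fm (A i0) (ee r1 s1) (ee r1 s1) \<noteq> 0" "Fm (B i0) (ee r2 s2) (ee r2 s2) \<noteq> 0"
            "Fm (C i0) (ee r3 s3) (ee r3 s3) \<noteq> 0" for r1 r2 r3 s1 s2 s3
  proof (rule ccontr)
    assume "\<not> ?thesis"
    then have G0: "Fm Gamma (tp (ee r1 s1) (ee r2 s2) (ee r3 s3)) (tp (ee r1 s1) (ee r2 s2) (ee r3 s3)) = 0"
      by (rule Gamma_basis[OF r])
    define f where "f = (\<lambda>i. Fm (A i) (ee r1 s1) (ee r1 s1) * Fm (B i) (ee r2 s2) (ee r2 s2) * Fm (C i) (ee r3 s3) (ee r3 s3))"
    have S0: "sum f I = 0" using G0 by (simp only: f_def GS)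
    have nn: "0 \<le> f i" if i: "i \<in> I" for i
      unfolding f_def
      using assms(2)[OF i] assms(3)[OF i] assms(4)[OF i] by (intro mult_nonneg_nonneg Fm_nonneg) auto
    have "f i0 = 0"
      using sum_nonneg_eq_0_iff[OF assms(1), of f] nn S0 i0 by blast
    then have "Fm (A i0) (ee r1 s1) (ee r1 s1) * Fm (B i0) (ee r2 s2) (ee r2 s2) * Fm (C i0) (ee r3 s3) (ee r3 s3) = 0"
      by (simp add: f_def)
    with nz show False by simp
  qed
  from assms(2)[OF i0] obtain r1 s1 where r1: "r1 \<le> 3" and n1: "Fm (A i0) (ee r1 s1) (ee r1 s1) \<noteq> 0"
    using nonzero by blast
  from assms(3)[OF i0] obtain r2 s2 where r2: "r2 \<le> 3" and n2: "Fm (B i0) (ee r2 s2) (ee r2 s2) \<noteq> 0"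
    using nonzero by blast
  from assms(4)[OF i0] obtain r3 s3 where r3: "r3 \<le> 3" and n3: "Fm (C i0) (ee r3 s3) (ee r3 s3) \<noteq> 0"
    using nonzero by blast
  from K[OF r1 r2 r3 n1 n2 n3] have s: "\<not> s1" "\<not> s2" "\<not> s3" and T: "(r1,r2,r3) \<in> Tset" by auto
  have zA: "Fm (A i0) (ee r s) (ee r s) = 0" if "r \<le> 3" "(r, s) \<noteq> (r1, False)" for r s
  proof (rule ccontr)
    assume "Fm (A i0) (ee r s) (ee r s) \<noteq> 0"
    from K[OF that(1) r2 r3 this] n2 n3 s have "\<not> s" "(r,r2,r3) \<in> Tset" by auto
    with latin1[OF T] that(2) show False by auto
  qed
  have zB: "Fm (B i0) (ee r s) (ee r s) = 0" if "r \<le> 3" "(r, s) \<noteq> (r2, False)" for r s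
  proof (rule ccontr)
    assume "Fm (B i0) (ee r s) (ee r s) \<noteq> 0"
    from K[OF r1 that(1) r3 n1 this n3] s have "\<not> s" "(r1,r,r3) \<in> Tset" by auto
    with latin2[OF T] that(2) show False by auto
  qed
  have zC: "Fm (C i0) (ee r s) (ee r s) = 0" if "r \<le> 3" "(r, s) \<noteq> (r3, False)" for r s
  proof (rule ccontr)
    assume "Fm (C i0) (ee r s) (ee r s) \<noteq> 0"
    from K[OF r1 r2 that(1) n1 n2 this] s have "\<not> s" "(r1,r2,r) \<in> Tset" by auto
    with latin3[OF T] that(2) show False by auto
  qed
  obtain \<alpha> where a: "\<alpha> > 0" "A i0 = (\<lambda>x y. complex_of_real \<alpha> * bproj r1 x y)"
    using rep[OF _ _ r1 zA] assms(2)[OF i0] by blast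
  obtain \<beta> where b: "\<beta> > 0" "B i0 = (\<lambda>x y. complex_of_real \<beta> * bproj r2 x y)"
    using rep[OF _ _ r2 zB] assms(3)[OF i0] by blast
  obtain \<gamma> where c: "\<gamma> > 0" "C i0 = (\<lambda>x y. complex_of_real \<gamma> * bproj r3 x y)"
    using rep[OF _ _ r3 zC] assms(4)[OF i0] by blast
  show "\<exists>\<alpha> \<beta> \<gamma> :: real. \<alpha> > 0 \<and> \<beta> > 0 \<and> \<gamma> > 0 \<and>
           (\<exists>(a, b, c)\<in>Tset.
              A i0 = (\<lambda>x y. complex_of_real \<alpha> * bproj a x y) \<and>
              B i0 = (\<lambda>x y. complex_of_real \<beta> * bproj b x y) \<and>
              C i0 = (\<lambda>x y. complex_of_real \<gamma> * bproj c x y))"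
    using a b c T by blast
qed

end
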